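(* Let $k,n$ be integers with $0<k\leqslant n<2k$, and set $m=2k$. Then $\alpha(2k,n,k)=\frac{1}{2}\binom{2k}{k}=h(2k,n,k)$.
   Context: For positive integers $a\leqslant b$, $[a,b]=\{a,a+1,\dots,b\}$ and $[a]=[1,a]$; $\binom{X}{k}$ denotes the family of all $k$-subsets of a set $X$. A family of sets is intersecting if no two of its members are disjoint. For integers $0<k\leqslant n<2k\leqslant m$, an $(m,n,k)$-intersecting family is an intersecting family $\mathcal{F}$ with $\binom{[n]}{k}\subseteq\mathcal{F}\subseteq\binom{[m]}{k}$, and $\alpha(m,n,k)$ is the maximum cardinality of an $(m,n,k)$-intersecting family. Define $h(m,n,k)=\binom{n}{k}+\sum_{i=1}^{2k-n-1}\binom{n-1}{k-i-1}\binom{m-n}{i}$. *)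

theory Defs
  imports Complex_Main
begin

definition ksubsets :: "nat set \<Rightarrow> nat \<Rightarrow> nat set set" where
  "ksubsets X k = {A. A \<subseteq> X \<and> card A = k}"

definition intersecting :: "'a set set \<Rightarrow> bool" where
  "intersecting F \<longleftrightarrow> (\<forall>A\<in>F. \<forall>B\<in>F. A \<inter> B \<noteq> {})"

definition mnk_intersecting :: "nat \<Rightarrow> nat \<Rightarrow> nat \<Rightarrow> nat set set \<Rightarrow> bool" where
  "mnk_intersecting m n k F \<longleftrightarrow>
     intersecting F \<and> ksubsets {1..n} k \<subseteq> F \<and> F \<subseteq> ksubsets {1..m} k"

definition alpha :: "nat \<Rightarrow> nat \<Rightarrow> nat \<Rightarrow> nat" where
  "alpha m n k = Max {card F | F. mnk_intersecting m n k F}"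

definition h :: "nat \<Rightarrow> nat \<Rightarrow> nat \<Rightarrow> nat" where
  "h m n k = (n choose k) +
     (\<Sum>i = 1..2*k - n - 1. ((n - 1) choose (k - i - 1)) * ((m - n) choose i))"

end

theory Submission
  imports Defs
begin

lemma h_identity:
  fixes k n :: nat
  assumes "0 < k" and "k \<le> n" and "n < 2 * k"
  shows "h (2 * k) n k = (2*k-1) choose (k-1)"
proof -
  define b where "b = 2*k - n"
  have b1: "1 \<le> b" and bk: "b \<le> k" using assms unfolding b_def by auto
  define f where "f j = (b choose j) * ((n-1) choose (k-1-j))" for j
  have V: "(\<Sum>j\<le>k-1. f j) = (2*k-1) choose (k-1)"
    proof -
    have "b + (n-1) = 2*k-1" using assms unfolding b_def by auto
    then show ?thesis unfolding f_def using vandermonde[where r="k-1" and m=b and n="n-1"] by simp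
  qed
  have split: "{..k-1} = insert 0 ({1..b-1} \<union> {b..k-1})" using b1 bk by auto
  have S: "(\<Sum>j\<le>k-1. f j) = f 0 + (\<Sum>j=1..b-1. f j) + (\<Sum>j=b..k-1. f j)"
    using b1 unfolding split by (subst sum.insert) (auto simp: sum.union_disjoint)
  have hsum: "(\<Sum>i = 1..2*k - n - 1. ((n - 1) choose (k - i - 1)) * ((2*k - n) choose i))
      = (\<Sum>j=1..b-1. f j)"
    unfolding f_def b_def by (rule sum.cong) (auto simp: diff_diff_add)
  have f0: "f 0 = (n-1) choose (k-1)" unfolding f_def by simp
  have tail: "(\<Sum>j=b..k-1. f j) = (n-1) choose k"
  proof (cases "n = k")
    case True
    then have "b = k" unfolding b_def by simp
    then have "{b..k-1} = {}" using assms by auto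
    then show ?thesis using True assms by simp
  next
    case False
    then have bl: "b \<le> k-1" using assms unfolding b_def by auto
    have e: "{b..k-1} = insert b {b+1..k-1}" using bl by auto
    have z: "(\<Sum>j=b+1..k-1. f j) = 0" unfolding f_def by (auto intro!: sum.neutral)
    have "f b = (n-1) choose (k-1-b)" unfolding f_def by simp
    also have "k-1-b = (n-1) - k" using False assms unfolding b_def by auto
    also have "(n-1) choose ((n-1)-k) = (n-1) choose k"
    proof -
      have "k \<le> n-1" using False assms by auto
      then show ?thesis using binomial_symmetric[of k "n-1"] by simp
    qed
    finally show ?thesis unfolding e using z by simp
  qed
  have nk: "n choose k = ((n-1) choose (k-1)) + ((n-1) choose k)"
    using choose_reduce_nat assms by auto
  show ?thesis unfolding h_def using hsum V S f0 tail nk by (simp add: b_def)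
qed

lemma half_binom:
  assumes "0 < (k::nat)"
  shows "(2*k) choose k = 2 * ((2*k-1) choose k)"
proof -
  have "(2*k) choose k = ((2*k-1) choose (k-1)) + ((2*k-1) choose k)"
    using choose_reduce_nat assms by auto
  moreover have "(2*k-1) choose (k-1) = (2*k-1) choose k"
  proof -
    have "2*k-1-k = k-1" "k \<le> 2*k-1" using assms by auto
    then show ?thesis using binomial_symmetric[of k "2*k-1"] by simp
  qed
  ultimately show ?thesis by simp
qed

lemma card_ksubsets: "card (ksubsets {1..m} k) = m choose k"
  unfolding ksubsets_def using n_subsets[of "{1..m}" k] by simp

lemma upper:
  assumes "0 < k" and "intersecting F" and "F \<subseteq> ksubsets {1..2*k} k"
  shows "2 * card F \<le> (2*k) choose k"
proof -
  define U where "U = {1..2*k}"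
  define c where "c A = U - A" for A
  have fin: "finite (ksubsets U k)" unfolding ksubsets_def U_def by simp
  have finF: "finite F" using fin assms(3) unfolding U_def by (metis finite_subset)
  have injc: "inj_on c F"
  proof
    fix A B assume "A \<in> F" "B \<in> F" "c A = c B"
    then have "A \<subseteq> U" "B \<subseteq> U" using assms(3) unfolding ksubsets_def U_def by auto
    then show "A = B" using \<open>c A = c B\<close> unfolding c_def by blast
  qed
  have cF: "c ` F \<subseteq> ksubsets U k - F"
  proof
    fix X assume "X \<in> c ` F"
    then obtain A where A: "A \<in> F" "X = U - A" unfolding c_def by auto
    have AU: "A \<subseteq> U" "card A = k" using A assms(3) unfolding ksubsets_def U_def by auto
    have "card U = 2*k" unfolding U_def by simp
    then have "card (U - A) = k" using AU card_Diff_subset[of A U] finite_subset[of A U]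
      unfolding U_def by auto
    then have "X \<in> ksubsets U k" using A unfolding ksubsets_def by auto
    moreover have "X \<notin> F"
    proof
      assume "X \<in> F"
      then have "A \<inter> X \<noteq> {}" using assms(2) A unfolding intersecting_def by blast
      then show False using A by auto
    qed
    ultimately show "X \<in> ksubsets U k - F" by simp
  qed
  have "card F + card (c ` F) \<le> card (ksubsets U k)"
  proof -
    have "card (c ` F) \<le> card (ksubsets U k - F)"
      using cF by (intro card_mono) (use fin in auto)
    also have "\<dots> = card (ksubsets U k) - card F"
      using assms(3) finF unfolding U_def by (intro card_Diff_subset) auto
    finally have "card (c ` F) \<le> card (ksubsets U k) - card F" .
    moreover have "card F \<le> card (ksubsets U k)" using card_mono[OF fin] assms(3) unfolding U_def by blast
    ultimately show ?thesis by linarith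
  qed
  then show ?thesis using card_image[OF injc] card_ksubsets[of "2*k" k] U_def by simp
qed

theorem proposition5:
  fixes k n :: nat
  assumes "0 < k" and "k \<le> n" and "n < 2 * k"
  shows "real (alpha (2 * k) n k) = real ((2 * k) choose k) / 2
         \<and> alpha (2 * k) n k = h (2 * k) n k"
proof -
  define F0 where "F0 = ksubsets {1..2*k-1} k"
  have F0: "mnk_intersecting (2*k) n k F0"
    unfolding mnk_intersecting_def
  proof (intro conjI)
    show "intersecting F0" unfolding intersecting_def F0_def ksubsets_def
    proof (intro ballI)
      fix A B assume A: "A \<in> {A. A \<subseteq> {1..2 * k - 1} \<and> card A = k}"
        and B: "B \<in> {A. A \<subseteq> {1..2 * k - 1} \<and> card A = k}"
      show "A \<inter> B \<noteq> {}"
      proof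
        assume d: "A \<inter> B = {}"
        have fA: "finite A" "finite B" using A B finite_subset by auto
        have "card (A \<union> B) = 2*k" using card_Un_disjoint[OF fA d] A B by simp
        moreover have "card (A \<union> B) \<le> 2*k-1"
          using card_mono[of "{1..2*k-1}" "A \<union> B"] A B by auto
        ultimately show False using assms by simp
      qed
    qed
    have "{1..n} \<subseteq> {1..2*k-1}" using assms by auto
    then show "ksubsets {1..n} k \<subseteq> F0" unfolding F0_def ksubsets_def by blast
    have "{1..2*k-1} \<subseteq> {1..2*k}" by auto
    then show "F0 \<subseteq> ksubsets {1..2*k} k" unfolding F0_def ksubsets_def by blast
  qed
  have cF0: "card F0 = (2*k-1) choose k" unfolding F0_def by (rule card_ksubsets)
  define S where "S = {card F | F. mnk_intersecting (2*k) n k F}"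
  have ub: "x \<le> card F0" if xS: "x \<in> S" for x
  proof -
    obtain F where x: "x = card F" and m: "mnk_intersecting (2*k) n k F" using xS unfolding S_def by blast
    have m': "intersecting F \<and> ksubsets {1..n} k \<subseteq> F \<and> F \<subseteq> ksubsets {1..2*k} k"
      using m unfolding mnk_intersecting_def .
    have i: "intersecting F" using m' by (rule conjunct1)
    have s: "F \<subseteq> ksubsets {1..2*k} k" using m' by (elim conjE)
    have "2*card F \<le> 2*card F0" using upper[OF assms(1) i s] cF0 half_binom[OF assms(1)] by simp
    then show ?thesis using x by simp
  qed
  have finS: "finite S" using ub by (meson finite_atMost rev_finite_subset subsetI atMost_iff)
  have inS: "card F0 \<in> S" using F0 S_def by auto
  have "alpha (2*k) n k = card F0"
    unfolding alpha_def S_def[symmetric]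
    using finS inS ub by (intro Max_eqI) auto
  moreover have "(2*k-1) choose (k-1) = (2*k-1) choose k"
  proof -
    have "2*k-1-k = k-1" "k \<le> 2*k-1" using assms by auto
    then show ?thesis using binomial_symmetric[of k "2*k-1"] by simp
  qed
  ultimately show ?thesis using cF0 half_binom[OF assms(1)] h_identity[OF assms] by simp
qed

end
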